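(* Let $X$ be a uniformly smooth Banach space and let $\{S_i\}_{i=1}^\infty$ be a family of nonempty subsets of $X$ such that $a\in\bigcap_{i=1}^\infty\operatorname{conv} S_i$ and $D=\sup_i\operatorname{diam} S_i<\infty$. Then there exists a sequence $\{x_i\}_{i=1}^\infty$ with $x_i\in S_i$ for every $i$ such that, for every $k\in\mathbb{N}$, the vector $a_k=\frac1k\sum_{i=1}^k x_i$ satisfies $$\|a-a_k\|\le \frac{2e^2}{k\,\rho_X^{-1}(1/k)}\,D .$$
   Context: The modulus of smoothness of a Banach space $X$ is $\rho_X(\tau)=\sup\{\tfrac12(\|x+\tau y\|+\|x-\tau y\|)-1 : \|x\|=\|y\|=1\}$ for $\tau\ge 0$. $X$ is uniformly smooth if $\rho_X(t)=o(t)$ as $t\to0$. The function $\rho_X$ is convex, strictly increasing and continuous on $[0,\infty)$, with $\rho_X(0)=0$, and it satisfies $\sqrt{1+\tau^2}-1\le\rho_X(\tau)$. Consequently it is a bijection of $[0,\infty)$ onto itself, and $\rho_X^{-1}$ denotes its inverse function. $\operatorname{conv}$ denotes the convex hull, and $\operatorname{diam} S=\sup_{x,y\in S}\|x-y\|$. *)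

theory Defs
  imports "HOL-Analysis.Analysis"
begin

definition mod_smooth :: "'a::real_normed_vector itself \<Rightarrow> real \<Rightarrow> real" where
  "mod_smooth _ \<tau> = Sup {(norm (x + \<tau> *\<^sub>R y) + norm (x - \<tau> *\<^sub>R y)) / 2 - 1 | x y :: 'a.
                          norm x = 1 \<and> norm y = 1}"

definition uniformly_smooth :: "'a::real_normed_vector itself \<Rightarrow> bool" where
  "uniformly_smooth T \<longleftrightarrow> ((\<lambda>t. mod_smooth T t / t) \<longlongrightarrow> 0) (at_right 0)"

definition mod_smooth_inv :: "'a::real_normed_vector itself \<Rightarrow> real \<Rightarrow> real" where
  "mod_smooth_inv T s = (THE t. t \<ge> 0 \<and> mod_smooth T t = s)"

end

theory Submission
  imports Defs
begin

lemma ms_upper: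
  fixes x y :: "'a::real_normed_vector"
  assumes "norm x = 1" "norm y = 1"
  shows "(norm (x + t *\<^sub>R y) + norm (x - t *\<^sub>R y)) / 2 - 1 \<le> mod_smooth TYPE('a) t"
  unfolding mod_smooth_def
proof (rule cSup_upper)
  show "(norm (x + t *\<^sub>R y) + norm (x - t *\<^sub>R y)) / 2 - 1 \<in> {(norm (x + t *\<^sub>R y) + norm (x - t *\<^sub>R y)) / 2 - 1 |x y::'a. norm x = 1 \<and> norm y = 1}"
    using assms by blast
  have "\<And>x y::'a. norm x = 1 \<Longrightarrow> norm y = 1 \<Longrightarrow> (norm (x + t *\<^sub>R y) + norm (x - t *\<^sub>R y)) / 2 - 1 \<le> \<bar>t\<bar>"
  proof -
    fix x y :: 'a assume x: "norm x = 1" and y: "norm y = 1"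
    have "norm (x + t *\<^sub>R y) \<le> 1 + \<bar>t\<bar>" using norm_triangle_ineq[of x "t *\<^sub>R y"] x y by simp
    moreover have "norm (x - t *\<^sub>R y) \<le> 1 + \<bar>t\<bar>" using norm_triangle_ineq4[of x "t *\<^sub>R y"] x y by simp
    ultimately show "(norm (x + t *\<^sub>R y) + norm (x - t *\<^sub>R y)) / 2 - 1 \<le> \<bar>t\<bar>" by (simp add: field_simps)
  qed
  then show "bdd_above {(norm (x + t *\<^sub>R y) + norm (x - t *\<^sub>R y)) / 2 - 1 |x y::'a. norm x = 1 \<and> norm y = 1}"
    by (auto intro!: bdd_aboveI)
qed

lemma ms_least:
  fixes e :: "'a::real_normed_vector"
  assumes "e \<noteq> 0"
    and "\<And>x y::'a. norm x = 1 \<Longrightarrow> norm y = 1 \<Longrightarrow> (norm (x + t *\<^sub>R y) + norm (x - t *\<^sub>R y)) / 2 - 1 \<le> c"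
  shows "mod_smooth TYPE('a) t \<le> c"
  unfolding mod_smooth_def
proof (rule cSup_least)
  have "norm (sgn e) = 1" using assms(1) by (simp add: norm_sgn)
  then show "{(norm (x + t *\<^sub>R y) + norm (x - t *\<^sub>R y)) / 2 - 1 |x y::'a. norm x = 1 \<and> norm y = 1} \<noteq> {}"
    by blast
  show "\<And>z. z \<in> {(norm (x + t *\<^sub>R y) + norm (x - t *\<^sub>R y)) / 2 - 1 |x y::'a. norm x = 1 \<and> norm y = 1} \<Longrightarrow> z \<le> c"
    using assms(2) by blast
qed

lemma ms_zero:
  fixes e :: "'a::real_normed_vector"
  assumes "e \<noteq> 0"
  shows "mod_smooth TYPE('a) 0 = 0"
proof (rule antisym)
  show "mod_smooth TYPE('a) 0 \<le> 0" by (rule ms_least[OF assms]) simp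
  have n: "norm (sgn e) = 1" using assms by (simp add: norm_sgn)
  from ms_upper[OF n n, of 0] n show "0 \<le> mod_smooth TYPE('a) 0" by simp
qed

lemma ms_lower:
  fixes e :: "'a::real_normed_vector"
  assumes "e \<noteq> 0" "0 \<le> t"
  shows "max t 1 - 1 \<le> mod_smooth TYPE('a) t"
proof -
  define u where "u = sgn e"
  have u: "norm u = 1" using assms by (simp add: norm_sgn u_def)
  have "u + t *\<^sub>R u = (1 + t) *\<^sub>R u" by (simp add: algebra_simps)
  hence 1: "norm (u + t *\<^sub>R u) = 1 + t" using u assms by simp
  have "u - t *\<^sub>R u = (1 - t) *\<^sub>R u" by (simp add: algebra_simps)
  hence 2: "norm (u - t *\<^sub>R u) = \<bar>1 - t\<bar>" using u by simp
  have "max t 1 - 1 = (norm (u + t *\<^sub>R u) + norm (u - t *\<^sub>R u)) / 2 - 1"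
    unfolding 1 2 by (simp add: max_def abs_if)
  also have "\<dots> \<le> mod_smooth TYPE('a) t" by (rule ms_upper[OF u u])
  finally show ?thesis .
qed

lemma ms_convex:
  fixes e :: "'a::real_normed_vector"
  assumes "e \<noteq> 0" "0 \<le> l" "l \<le> 1"
  shows "mod_smooth TYPE('a) (l * p + (1 - l) * q) \<le> l * mod_smooth TYPE('a) p + (1 - l) * mod_smooth TYPE('a) q"
proof (rule ms_least[OF assms(1)])
  fix x y :: 'a assume x: "norm x = 1" and y: "norm y = 1"
  have e1: "x + (l * p + (1 - l) * q) *\<^sub>R y = l *\<^sub>R (x + p *\<^sub>R y) + (1 - l) *\<^sub>R (x + q *\<^sub>R y)"
    by (simp add: algebra_simps)
  have e2: "x - (l * p + (1 - l) * q) *\<^sub>R y = l *\<^sub>R (x - p *\<^sub>R y) + (1 - l) *\<^sub>R (x - q *\<^sub>R y)"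
    by (simp add: algebra_simps)
  have n1: "norm (x + (l * p + (1 - l) * q) *\<^sub>R y) \<le> l * norm (x + p *\<^sub>R y) + (1 - l) * norm (x + q *\<^sub>R y)"
    unfolding e1 using norm_triangle_ineq[of "l *\<^sub>R (x + p *\<^sub>R y)" "(1 - l) *\<^sub>R (x + q *\<^sub>R y)"] assms by simp
  have n2: "norm (x - (l * p + (1 - l) * q) *\<^sub>R y) \<le> l * norm (x - p *\<^sub>R y) + (1 - l) * norm (x - q *\<^sub>R y)"
    unfolding e2 using norm_triangle_ineq[of "l *\<^sub>R (x - p *\<^sub>R y)" "(1 - l) *\<^sub>R (x - q *\<^sub>R y)"] assms by simp
  have a: "l * ((norm (x + p *\<^sub>R y) + norm (x - p *\<^sub>R y)) / 2 - 1) \<le> l * mod_smooth TYPE('a) p"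
    using ms_upper[OF x y, of p] assms by (simp add: mult_left_mono)
  have b: "(1 - l) * ((norm (x + q *\<^sub>R y) + norm (x - q *\<^sub>R y)) / 2 - 1) \<le> (1 - l) * mod_smooth TYPE('a) q"
    using ms_upper[OF x y, of q] assms by (simp add: mult_left_mono)
  show "(norm (x + (l * p + (1 - l) * q) *\<^sub>R y) + norm (x - (l * p + (1 - l) * q) *\<^sub>R y)) / 2 - 1
        \<le> l * mod_smooth TYPE('a) p + (1 - l) * mod_smooth TYPE('a) q"
    using n1 n2 a b by (simp add: algebra_simps divide_simps)
qed

lemma ms_ratio:
  fixes e :: "'a::real_normed_vector"
  assumes "e \<noteq> 0" "0 \<le> s" "s \<le> t" "0 < t"
  shows "mod_smooth TYPE('a) s \<le> s / t * mod_smooth TYPE('a) t"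
proof -
  have "mod_smooth TYPE('a) (s / t * t + (1 - s / t) * 0) \<le> s / t * mod_smooth TYPE('a) t + (1 - s / t) * mod_smooth TYPE('a) 0"
    by (rule ms_convex[OF assms(1)]) (use assms in auto)
  then show ?thesis using assms ms_zero[OF assms(1)] by simp
qed

lemma ms_nonneg:
  fixes e :: "'a::real_normed_vector"
  assumes "e \<noteq> 0" "0 \<le> t"
  shows "0 \<le> mod_smooth TYPE('a) t"
  using ms_lower[OF assms] by simp

lemma ms_mono:
  fixes e :: "'a::real_normed_vector"
  assumes "e \<noteq> 0" "0 \<le> s" "s \<le> t"
  shows "mod_smooth TYPE('a) s \<le> mod_smooth TYPE('a) t"
proof (cases "t = 0")
  case True then show ?thesis using assms by simp
next
  case False
  hence t: "0 < t" using assms by simp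
  have "mod_smooth TYPE('a) s \<le> s / t * mod_smooth TYPE('a) t" by (rule ms_ratio[OF assms t])
  also have "\<dots> \<le> mod_smooth TYPE('a) t"
  proof -
    have "s * mod_smooth TYPE('a) t \<le> t * mod_smooth TYPE('a) t"
      using ms_nonneg[OF assms(1), of t] t assms by (intro mult_right_mono) auto
    then show ?thesis using t by (simp add: pos_divide_le_eq mult.commute)
  qed
  finally show ?thesis .
qed

lemma ms_lip:
  fixes e :: "'a::real_normed_vector"
  assumes "e \<noteq> 0"
  shows "mod_smooth TYPE('a) s \<le> mod_smooth TYPE('a) t + \<bar>s - t\<bar>"
proof (rule ms_least[OF assms])
  fix x y :: 'a assume x: "norm x = 1" and y: "norm y = 1"
  have q1: "norm (x + s *\<^sub>R y) = norm ((x + t *\<^sub>R y) + (s - t) *\<^sub>R y)" by (rule arg_cong[where f=norm]) (simp add: algebra_simps)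
  have tr1: "norm ((x + t *\<^sub>R y) + (s - t) *\<^sub>R y) \<le> norm (x + t *\<^sub>R y) + \<bar>s - t\<bar>"
    using norm_triangle_ineq[of "x + t *\<^sub>R y" "(s - t) *\<^sub>R y"] by (simp only: norm_scaleR y real_norm_def mult_1_right)
  have 1: "norm (x + s *\<^sub>R y) \<le> norm (x + t *\<^sub>R y) + \<bar>s - t\<bar>" using q1 tr1 by linarith
  have q2: "norm (x - s *\<^sub>R y) = norm ((x - t *\<^sub>R y) + (t - s) *\<^sub>R y)" by (rule arg_cong[where f=norm]) (simp add: algebra_simps)
  have tr2: "norm ((x - t *\<^sub>R y) + (t - s) *\<^sub>R y) \<le> norm (x - t *\<^sub>R y) + \<bar>t - s\<bar>"
    using norm_triangle_ineq[of "x - t *\<^sub>R y" "(t - s) *\<^sub>R y"] by (simp only: norm_scaleR y real_norm_def mult_1_right)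
  have 2: "norm (x - s *\<^sub>R y) \<le> norm (x - t *\<^sub>R y) + \<bar>s - t\<bar>" using q2 tr2 by linarith
  show "(norm (x + s *\<^sub>R y) + norm (x - s *\<^sub>R y)) / 2 - 1 \<le> mod_smooth TYPE('a) t + \<bar>s - t\<bar>"
    using 1 2 ms_upper[OF x y, of t] by (simp add: field_simps)
qed

lemma ms_cont:
  fixes e :: "'a::real_normed_vector"
  assumes "e \<noteq> 0"
  shows "continuous_on A (mod_smooth TYPE('a))"
proof (rule lipschitz_on_continuous_on)
  show "1-lipschitz_on A (mod_smooth TYPE('a))"
  proof (rule lipschitz_onI)
    fix x y :: real
    show "dist (mod_smooth TYPE('a) x) (mod_smooth TYPE('a) y) \<le> 1 * dist x y"
      using ms_lip[OF assms, of x y] ms_lip[OF assms, of y x] by (simp add: dist_real_def abs_le_iff abs_minus_commute)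
  qed simp
qed

lemma ms_inv:
  fixes e :: "'a::real_normed_vector"
  assumes "e \<noteq> 0" "0 < v" "v \<le> 1"
  shows "mod_smooth TYPE('a) (mod_smooth_inv TYPE('a) v) = v \<and> 0 < mod_smooth_inv TYPE('a) v
         \<and> mod_smooth_inv TYPE('a) v \<le> 2"
proof -
  have "mod_smooth TYPE('a) 0 \<le> v" using ms_zero[OF assms(1)] assms by simp
  moreover have "v \<le> mod_smooth TYPE('a) 2" using ms_lower[OF assms(1), of 2] assms by simp
  ultimately obtain t0 where t0: "0 \<le> t0" "t0 \<le> 2" "mod_smooth TYPE('a) t0 = v"
    using IVT'[of "mod_smooth TYPE('a)" 0 v 2] ms_cont[OF assms(1)] by auto
  have pos: "0 < t1" if "0 \<le> t1" "mod_smooth TYPE('a) t1 = v" for t1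
  proof (rule ccontr)
    assume "\<not> 0 < t1"
    hence "t1 = 0" using that(1) by simp
    thus False using that(2) ms_zero[OF assms(1)] assms(2) by simp
  qed
  have lt: False if "0 \<le> t1" "mod_smooth TYPE('a) t1 = v" "t1 < t2" "mod_smooth TYPE('a) t2 = v" for t1 t2
  proof -
    have t2: "0 < t2" using that by simp
    have "v \<le> t1 / t2 * v"
      using ms_ratio[OF assms(1) that(1) _ t2] that by simp
    moreover have "t1 / t2 < 1" using that by simp
    moreover have "t1 / t2 * v < 1 * v"
      using \<open>t1 / t2 < 1\<close> assms(2) by (rule mult_strict_right_mono)
    ultimately show False by simp
  qed
  have uniq: "t = t0" if "0 \<le> t" "mod_smooth TYPE('a) t = v" for t
  proof (cases t t0 rule: linorder_cases)
    case less thus ?thesis using lt[of t t0] that t0 by blast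
  next
    case equal thus ?thesis .
  next
    case greater thus ?thesis using lt[of t0 t] that t0 by blast
  qed
  have "mod_smooth_inv TYPE('a) v = t0"
    unfolding mod_smooth_inv_def
  proof (rule the_equality)
    show "0 \<le> t0 \<and> mod_smooth TYPE('a) t0 = v" using t0 by simp
    show "\<And>t. 0 \<le> t \<and> mod_smooth TYPE('a) t = v \<Longrightarrow> t = t0" using uniq by blast
  qed
  moreover have "0 < t0" using pos t0 by blast
  ultimately show ?thesis using t0 by simp
qed

lemma ms_key:
  fixes z w :: "'a::real_normed_vector"
  assumes "z \<noteq> 0"
  shows "norm (z + w) + norm (z - w) \<le> 2 * norm z * (1 + mod_smooth TYPE('a) (norm w / norm z))"
proof (cases "w = 0")
  case True thus ?thesis using ms_zero[OF assms] by simp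
next
  case False
  define nz where "nz = norm z"
  define nw where "nw = norm w"
  have nz: "0 < nz" using assms by (simp add: nz_def)
  have nw: "0 < nw" using False by (simp add: nw_def)
  define x where "x = (1 / nz) *\<^sub>R z"
  define y where "y = (1 / nw) *\<^sub>R w"
  have x: "norm x = 1" using nz by (simp add: x_def nz_def)
  have y: "norm y = 1" using nw by (simp add: y_def nw_def)
  have "(nw / nz) *\<^sub>R y = (1 / nz) *\<^sub>R w" using nw by (simp add: y_def)
  hence p: "x + (nw / nz) *\<^sub>R y = (1 / nz) *\<^sub>R (z + w)" and m: "x - (nw / nz) *\<^sub>R y = (1 / nz) *\<^sub>R (z - w)"
    by (simp_all add: x_def scaleR_right_distrib scaleR_right_diff_distrib)
  have "(norm (x + (nw / nz) *\<^sub>R y) + norm (x - (nw / nz) *\<^sub>R y)) / 2 - 1 \<le> mod_smooth TYPE('a) (nw / nz)"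
    by (rule ms_upper[OF x y])
  hence "(norm (z + w) / nz + norm (z - w) / nz) / 2 - 1 \<le> mod_smooth TYPE('a) (nw / nz)"
    unfolding p m using nz by simp
  thus ?thesis using nz unfolding nz_def[symmetric] nw_def[symmetric] by (simp add: field_simps)
qed

lemma avg_min:
  fixes f u :: "'b \<Rightarrow> real"
  assumes "finite T" "T \<noteq> {}" "\<forall>y\<in>T. 0 \<le> u y" "sum u T = 1"
  shows "\<exists>y\<in>T. f y \<le> (\<Sum>y\<in>T. u y * f y)"
proof -
  define m where "m = Min (f ` T)"
  have "m \<in> f ` T" unfolding m_def using assms by simp
  then obtain y0 where y0: "y0 \<in> T" "f y0 = m" by auto
  have le: "\<And>y. y \<in> T \<Longrightarrow> m \<le> f y" unfolding m_def using assms by simp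
  have "(\<Sum>y\<in>T. u y * m) \<le> (\<Sum>y\<in>T. u y * f y)"
    by (rule sum_mono) (use assms le in \<open>auto intro: mult_left_mono\<close>)
  moreover have "(\<Sum>y\<in>T. u y * m) = m" using assms by (simp add: sum_distrib_right[symmetric])
  ultimately show ?thesis using y0 by auto
qed

lemma choose_step:
  fixes z a :: "'a::real_normed_vector"
  assumes "z \<noteq> 0" "a \<in> convex hull S" "\<forall>x\<in>S. norm (x - a) \<le> D"
  shows "\<exists>x\<in>S. norm (z + (x - a)) \<le> norm z * (1 + 2 * mod_smooth TYPE('a) (D / norm z))"
proof -
  obtain T u where T: "finite T" "T \<subseteq> S" "\<forall>x\<in>T. 0 \<le> u x" "sum u T = 1" "(\<Sum>v\<in>T. u v *\<^sub>R v) = a"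
    using assms(2) unfolding convex_hull_explicit by blast
  have Tne: "T \<noteq> {}" using T(4) by auto
  define R where "R = norm z * (1 + 2 * mod_smooth TYPE('a) (D / norm z))"
  have nz: "0 < norm z" using assms by simp
  define R2 where "R2 = 2 * norm z * (1 + mod_smooth TYPE('a) (D / norm z))"
  have each: "norm (z + (y - a)) \<le> R2 - norm (z - (y - a))" if "y \<in> T" for y
  proof -
    have "norm (y - a) \<le> D" using assms(3) T(2) that by auto
    hence "mod_smooth TYPE('a) (norm (y - a) / norm z) \<le> mod_smooth TYPE('a) (D / norm z)"
      using nz by (intro ms_mono[OF assms(1)]) (auto simp: divide_right_mono)
    have k: "norm (z + (y - a)) + norm (z - (y - a)) \<le> 2 * norm z * (1 + mod_smooth TYPE('a) (norm (y - a) / norm z))"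
      by (rule ms_key[OF assms(1)])
    have "2 * norm z * (1 + mod_smooth TYPE('a) (norm (y - a) / norm z)) \<le> R2"
      unfolding R2_def using nz \<open>mod_smooth TYPE('a) (norm (y - a) / norm z) \<le> mod_smooth TYPE('a) (D / norm z)\<close>
      by (intro mult_left_mono) auto
    then show ?thesis using k by linarith
  qed
  have sumz: "(\<Sum>y\<in>T. u y *\<^sub>R (z - (y - a))) = z"
  proof -
    have "(\<Sum>y\<in>T. u y *\<^sub>R (z - (y - a))) = (\<Sum>y\<in>T. u y *\<^sub>R (z + a) - u y *\<^sub>R y)"
      by (rule sum.cong) (simp_all add: algebra_simps)
    also have "\<dots> = (\<Sum>y\<in>T. u y) *\<^sub>R (z + a) - (\<Sum>y\<in>T. u y *\<^sub>R y)"
      by (simp add: sum_subtractf scaleR_sum_left)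
    also have "\<dots> = z" using T by simp
    finally show ?thesis .
  qed
  have "norm z \<le> (\<Sum>y\<in>T. norm (u y *\<^sub>R (z - (y - a))))"
    using norm_sum[of "\<lambda>y. u y *\<^sub>R (z - (y - a))" T] sumz by simp
  also have "\<dots> = (\<Sum>y\<in>T. u y * norm (z - (y - a)))"
    by (rule sum.cong) (use T in auto)
  finally have lowsum: "norm z \<le> (\<Sum>y\<in>T. u y * norm (z - (y - a)))" .
  have "(\<Sum>y\<in>T. u y * norm (z + (y - a))) \<le> (\<Sum>y\<in>T. u y * (R2 - norm (z - (y - a))))"
    by (rule sum_mono) (use T each in \<open>auto intro: mult_left_mono\<close>)
  also have "\<dots> = R2 - (\<Sum>y\<in>T. u y * norm (z - (y - a)))"
    using T by (simp add: right_diff_distrib sum_subtractf sum_distrib_right[symmetric])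
  finally have "(\<Sum>y\<in>T. u y * norm (z + (y - a))) \<le> R2 - norm z" using lowsum by linarith
  moreover obtain y where "y \<in> T" "norm (z + (y - a)) \<le> (\<Sum>y\<in>T. u y * norm (z + (y - a)))"
    using avg_min[OF T(1) Tne T(3) T(4), of "\<lambda>y. norm (z + (y - a))"] by blast
  ultimately have "norm (z + (y - a)) \<le> R2 - norm z" by linarith
  moreover have "R2 - norm z = R" unfolding R2_def R_def by (simp add: algebra_simps)
  ultimately have "norm (z + (y - a)) \<le> R" by linarith
  moreover have "y \<in> S" using \<open>y \<in> T\<close> T(2) by blast
  ultimately show ?thesis unfolding R_def by blast
qed

theorem corollary1:
  fixes S :: "nat \<Rightarrow> 'a::banach set" and a :: 'a
  assumes "uniformly_smooth TYPE('a)"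
    and "\<And>i. i \<ge> 1 \<Longrightarrow> S i \<noteq> {}"
    and "\<And>i. i \<ge> 1 \<Longrightarrow> a \<in> convex hull (S i)"
    and "\<And>i. i \<ge> 1 \<Longrightarrow> bounded (S i)"
    and "bdd_above ((\<lambda>i. diameter (S i)) ` {1..})"
  shows "\<exists>x :: nat \<Rightarrow> 'a. (\<forall>i\<ge>1. x i \<in> S i) \<and>
           (\<forall>k::nat\<ge>1. norm (a - (1 / real k) *\<^sub>R (\<Sum>i=1..k. x i))
              \<le> 2 * exp 2 / (real k * mod_smooth_inv TYPE('a) (1 / real k))
                * (SUP i\<in>{1..}. diameter (S i)))"
proof -
  define D where "D = (SUP i\<in>{1..}. diameter (S i))"
  have diamD: "diameter (S i) \<le> D" if "i \<ge> 1" for i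
    unfolding D_def using that assms(5) by (intro cSUP_upper) auto
  have dist_le: "norm (x - a) \<le> D" if i: "i \<ge> 1" and x: "x \<in> S i" for i x
  proof -
    have "S i \<subseteq> cball x (diameter (S i))"
      using diameter_bounded_bound[OF assms(4)[OF i] x] by (auto simp: mem_cball)
    hence "convex hull (S i) \<subseteq> cball x (diameter (S i))"
      by (rule hull_minimal) (rule convex_cball)
    hence "dist x a \<le> diameter (S i)" using assms(3)[OF i] by (auto simp: mem_cball)
    thus ?thesis using diamD[OF i] by (simp add: dist_norm)
  qed
  obtain x1 where x1: "x1 \<in> S 1" using assms(2)[of 1] by auto
  have D0: "0 \<le> D" using dist_le[OF _ x1] norm_ge_zero[of "x1 - a"] by linarith
  show ?thesis
  proof (cases "\<exists>e::'a. e \<noteq> 0")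
    case False
    hence all0: "\<And>v::'a. v = 0" by blast
    define x where "x i = (SOME v. v \<in> S i)" for i
    have xS: "\<forall>i\<ge>1. x i \<in> S i" unfolding x_def using assms(2) by (simp add: some_in_eq)
    have "D \<le> 0" unfolding D_def
    proof (rule cSUP_least)
      show "{1::nat..} \<noteq> {}" by auto
      fix i :: nat
      show "diameter (S i) \<le> 0" by (rule diameter_le) (simp, metis all0 norm_zero order_refl)
    qed
    hence "D = 0" using D0 by simp
    moreover have "norm (a - (1 / real k) *\<^sub>R (\<Sum>i=1..k. x i)) = 0" for k
      using all0 by simp
    ultimately show ?thesis using xS unfolding D_def[symmetric] by auto
  next
    case True
    then obtain e :: 'a where e: "e \<noteq> 0" by blast
    define P where "P i z v \<longleftrightarrow> v \<in> S i \<and> (z \<noteq> 0 \<longrightarrow> norm (z + (v - a)) \<le> norm z * (1 + 2 * mod_smooth TYPE('a) (D / norm z)))" for i z v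
    define pick where "pick i z = (SOME v. P i z v)" for i z
    have pick: "P i z (pick i z)" if ii: "i \<ge> 1" for i z
      unfolding pick_def
    proof (rule someI_ex)
      show "\<exists>v. P i z v"
      proof (cases "z = 0")
        case True
        obtain v where "v \<in> S i" using assms(2)[OF ii] by auto
        thus ?thesis using True unfolding P_def by blast
      next
        case False
        have "\<forall>v\<in>S i. norm (v - a) \<le> D" using dist_le[OF ii] by blast
        from choose_step[OF False assms(3)[OF ii] this] show ?thesis unfolding P_def by blast
      qed
    qed
    define zs where "zs = rec_nat 0 (\<lambda>n zn. zn + (pick (Suc n) zn - a))"
    have zs0: "zs 0 = 0" and zsS: "\<And>n. zs (Suc n) = zs n + (pick (Suc n) (zs n) - a)"
      by (simp_all add: zs_def)
    define x where "x i = pick i (zs (i - 1))" for i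
    have xS: "\<forall>i\<ge>1. x i \<in> S i" using pick unfolding x_def P_def by blast
    have xsum: "(\<Sum>i=1..k. x i) = zs k + real k *\<^sub>R a" for k
    proof (induction k)
      case 0 thus ?case by (simp add: zs0)
    next
      case (Suc k)
      have "(\<Sum>i=1..Suc k. x i) = (\<Sum>i=1..k. x i) + x (Suc k)" by simp
      also have "\<dots> = zs k + real k *\<^sub>R a + pick (Suc k) (zs k)" using Suc by (simp add: x_def)
      also have "\<dots> = zs (Suc k) + real (Suc k) *\<^sub>R a" by (simp add: zsS algebra_simps)
      finally show ?case .
    qed
    have stepA: "norm (zs (Suc n)) \<le> norm (zs n) + D" for n
    proof -
      have "pick (Suc n) (zs n) \<in> S (Suc n)" using pick[of "Suc n" "zs n"] unfolding P_def by simp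
      hence "norm (pick (Suc n) (zs n) - a) \<le> D" using dist_le[of "Suc n"] by simp
      thus ?thesis unfolding zsS using norm_triangle_ineq[of "zs n" "pick (Suc n) (zs n) - a"] by linarith
    qed
    have stepB: "norm (zs (Suc n)) \<le> norm (zs n) * (1 + 2 * mod_smooth TYPE('a) (D / norm (zs n)))"
      if "zs n \<noteq> 0" for n
      using pick[of "Suc n" "zs n"] that unfolding P_def zsS by simp
    have main: "norm (a - (1 / real k) *\<^sub>R (\<Sum>i=1..k. x i))
              \<le> 2 * exp 2 / (real k * mod_smooth_inv TYPE('a) (1 / real k)) * D" if k: "k \<ge> 1" for k
    proof -
      define t where "t = mod_smooth_inv TYPE('a) (1 / real k)"
      have kpos: "0 < real k" using k by simp
      have tp: "mod_smooth TYPE('a) t = 1 / real k" "0 < t" "t \<le> 2"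
        using ms_inv[OF e, of "1 / real k"] k unfolding t_def by auto
      define B where "B j = D / t + D + 2 * D * real j / (real k * t)" for j :: nat
      have Bmono: "B j \<le> B (Suc j)" for j
        unfolding B_def using D0 tp kpos by (simp add: divide_right_mono mult_left_mono)
      have B0: "D / t + D \<le> B j" for j
        unfolding B_def using D0 tp kpos by simp
      have inv: "j \<le> k \<Longrightarrow> norm (zs j) \<le> B j" for j
      proof (induction j)
        case 0
        have "0 \<le> D / t" using D0 tp by simp
        thus ?case using B0[of 0] D0 by (simp add: zs0)
      next
        case (Suc j)
        hence IH: "norm (zs j) \<le> B j" by simp
        show ?case
        proof (cases "norm (zs j) \<le> D / t")
          case True
          thus ?thesis using stepA[of j] B0[of "Suc j"] by linarith
        next
          case False
          define r where "r = norm (zs j)"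
          have r: "D / t < r" using False by (simp add: r_def)
          have rpos: "0 < r" using r D0 tp by (smt (verit) divide_nonneg_pos)
          hence nz: "zs j \<noteq> 0" by (auto simp: r_def)
          define s where "s = D / r"
          have s0: "0 \<le> s" using D0 rpos by (simp add: s_def)
          have "D < t * r" using r tp by (simp add: pos_divide_less_eq mult.commute)
          hence st: "s \<le> t" using rpos by (simp add: s_def pos_divide_le_eq mult.commute)
          have "mod_smooth TYPE('a) s \<le> s / t * mod_smooth TYPE('a) t"
            by (rule ms_ratio[OF e s0 st tp(2)])
          hence rho: "mod_smooth TYPE('a) s \<le> s / (t * real k)" using tp by simp
          have "r * (1 + 2 * mod_smooth TYPE('a) s) \<le> r * (1 + 2 * (s / (t * real k)))"
            using rho rpos by (intro mult_left_mono) auto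
          also have "\<dots> = r + 2 * D / (real k * t)"
            using rpos tp kpos by (simp add: s_def field_simps)
          finally have "norm (zs (Suc j)) \<le> r + 2 * D / (real k * t)"
            using stepB[OF nz] unfolding r_def s_def by linarith
          moreover have "B j + 2 * D / (real k * t) = B (Suc j)"
            unfolding B_def using tp kpos by (simp add: field_simps)
          ultimately show ?thesis using IH unfolding r_def by linarith
        qed
      qed
      have zk: "norm (zs k) \<le> B k" using inv by simp
      have "B k = D / t + D + 2 * D / t" unfolding B_def using kpos tp by (simp add: field_simps)
      also have "\<dots> \<le> 5 * (D / t)"
      proof -
        have "D \<le> 2 * (D / t)" using tp D0 by (simp add: field_simps mult_left_mono)
        thus ?thesis by linarith
      qed
      also have "\<dots> \<le> 2 * exp 2 * (D / t)"
      proof -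
        have "3 \<le> exp (2::real)" using exp_ge_add_one_self[of 2] by simp
        moreover have "0 \<le> D / t" using D0 tp by simp
        ultimately show ?thesis by (intro mult_right_mono) auto
      qed
      finally have zk2: "norm (zs k) \<le> 2 * exp 2 * (D / t)" using zk by linarith
      have "a - (1 / real k) *\<^sub>R (\<Sum>i=1..k. x i) = - ((1 / real k) *\<^sub>R zs k)"
        unfolding xsum using kpos by (simp add: algebra_simps)
      hence "norm (a - (1 / real k) *\<^sub>R (\<Sum>i=1..k. x i)) = norm (zs k) / real k"
        using kpos by simp
      also have "\<dots> \<le> (2 * exp 2 * (D / t)) / real k"
        by (rule divide_right_mono[OF zk2]) (use kpos in simp)
      also have "\<dots> = 2 * exp 2 / (real k * t) * D" by (simp add: field_simps)
      finally show ?thesis unfolding t_def .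
    qed
    show ?thesis using xS main unfolding D_def by blast
  qed
qed

end
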